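(* Let $d\ge 1$ and let $\Sigma: M_d(\mathbb{C})\to M_d(\mathbb{C})$ be a general dynamical map, i.e. a linear map that is trace preserving and hermiticity preserving ($\Sigma(\rho^\dagger)=\Sigma(\rho)^\dagger$ for all $\rho$), but not necessarily positivity preserving. Then $\Sigma$ can be written as the weighted difference of two completely positive trace-preserving (CPTP) maps: there exist a real number $p>0$ and CPTP maps $\Lambda^*_+,\Lambda^*_-$ on $M_d(\mathbb{C})$ such that $$\Sigma=(1+p)\,\Lambda^*_+-p\,\Lambda^*_-.$$ Explicitly: there exist finite families of matrices $\{K_j\}_j,\{M_j\}_j\subset M_d(\mathbb{C})$ with $\Sigma(\rho)=\sum_j K_j\rho K_j^\dagger-\sum_j M_j\rho M_j^\dagger$ for all $\rho$, and for any such families and any $p>0$ with $\sum_j M_j^\dagger M_j\le p\,\mathbb{I}$, setting $D=\sqrt{p\,\mathbb{I}-\sum_j M_j^\dagger M_j}$ (positive semidefinite square root) and $$\Lambda^*_+(\rho)=\frac{\sum_j K_j\rho K_j^\dagger+D\rho D^\dagger}{1+p},\qquad \Lambda^*_-(\rho)=\frac{\sum_j M_j\rho M_j^\dagger+D\rho D^\dagger}{p},$$ the maps $\Lambda^*_\pm$ are completely positive and trace preserving and $\Sigma=(1+p)\Lambda^*_+-p\Lambda^*_-$.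
   Context: $M_d(\mathbb{C})$ denotes the complex $d\times d$ matrices, $\mathbb{I}$ the identity matrix, and $A\le B$ means $B-A$ is positive semidefinite. A linear map $\Lambda$ on $M_d(\mathbb{C})$ is completely positive (CP) iff it has a Kraus form $\Lambda(\rho)=\sum_j K_j\rho K_j^\dagger$; it is trace preserving iff $\mathrm{tr}\,\Lambda(\rho)=\mathrm{tr}\,\rho$ for all $\rho$. *)

theory Defs
  imports "HOL-Analysis.Analysis"
begin

text \<open>Complex d x d matrices are modelled as complex^'d^'d for a finite type 'd
  (so d = CARD('d) >= 1 is arbitrary but fixed).\<close>

type_synonym 'd cmat = "complex^'d^'d"

definition cscale :: "complex \<Rightarrow> 'd::finite cmat \<Rightarrow> 'd::finite cmat" where
  "cscale c A = (\<chi> i j. c * A$i$j)"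

definition adj :: "'d::finite cmat \<Rightarrow> 'd::finite cmat" where
  "adj A = (\<chi> i j. cnj (A$j$i))"

definition cmat_linear :: "('d::finite cmat \<Rightarrow> 'd::finite cmat) \<Rightarrow> bool" where
  "cmat_linear f \<longleftrightarrow> (\<forall>A B. f (A + B) = f A + f B) \<and> (\<forall>c A. f (cscale c A) = cscale c (f A))"

definition trace_preserving :: "('d::finite cmat \<Rightarrow> 'd::finite cmat) \<Rightarrow> bool" where
  "trace_preserving f \<longleftrightarrow> (\<forall>\<rho>. trace (f \<rho>) = trace \<rho>)"

definition hermiticity_preserving :: "('d::finite cmat \<Rightarrow> 'd::finite cmat) \<Rightarrow> bool" where
  "hermiticity_preserving f \<longleftrightarrow> (\<forall>\<rho>. f (adj \<rho>) = adj (f \<rho>))"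

definition kraus :: "'d::finite cmat list \<Rightarrow> 'd::finite cmat \<Rightarrow> 'd::finite cmat" where
  "kraus Ks \<rho> = sum_list (map (\<lambda>K. K ** \<rho> ** adj K) Ks)"

definition completely_positive :: "('d::finite cmat \<Rightarrow> 'd::finite cmat) \<Rightarrow> bool" where
  "completely_positive f \<longleftrightarrow> (\<exists>Ks. \<forall>\<rho>. f \<rho> = kraus Ks \<rho>)"

definition CPTP :: "('d::finite cmat \<Rightarrow> 'd::finite cmat) \<Rightarrow> bool" where
  "CPTP f \<longleftrightarrow> completely_positive f \<and> trace_preserving f"

definition psd :: "'d::finite cmat \<Rightarrow> bool" where
  "psd A \<longleftrightarrow> (\<forall>x::complex^'d. let q = (\<Sum>i\<in>UNIV. cnj (x$i) * (A *v x)$i) in Im q = 0 \<and> Re q \<ge> 0)"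

definition loewner_le :: "'d::finite cmat \<Rightarrow> 'd::finite cmat \<Rightarrow> bool" where
  "loewner_le A B \<longleftrightarrow> psd (B - A)"

definition psd_sqrt :: "'d::finite cmat \<Rightarrow> 'd::finite cmat" where
  "psd_sqrt A = (THE D. psd D \<and> D ** D = A)"

end

theory Submission
  imports Defs "HOL-Analysis.Analysis"
begin


definition sa :: "('a::real_inner \<Rightarrow> 'a) \<Rightarrow> bool" where
  "sa f \<longleftrightarrow> linear f \<and> (\<forall>x y. inner (f x) y = inner x (f y))"

lemma neg_quad: "(c::real) \<ge> 0 \<Longrightarrow> a \<noteq> 0 \<Longrightarrow> 2 * (- a / (c + 1)) * a + (- a / (c + 1)) * (- a / (c + 1)) * c < 0"
proof -
  assume c0: "(c::real) \<ge> 0" and an: "a \<noteq> 0"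
  define e where "e = c + 1"
  have d: "e > 0" using c0 e_def by linarith
  have "2 * (- a / e) * a + (- a / e) * (- a / e) * (e - 1) = (a*a) * (- e - 1) / (e*e)"
    using d by (simp add: field_simps)
  also have "\<dots> < 0" using an d by (intro divide_neg_pos mult_pos_neg) (auto simp: not_square_less_zero zero_less_mult_iff)
  finally show ?thesis by (simp add: e_def)
qed

lemma psd_zero:
  fixes g :: "'a::real_inner \<Rightarrow> 'a"
  assumes "sa g" "subspace S" "g ` S \<subseteq> S" "\<forall>x\<in>S. 0 \<le> inner x (g x)" "v \<in> S" "inner v (g v) = 0"
  shows "g v = 0"
proof -
  have lin: "linear g" and sym: "\<And>x y. inner (g x) y = inner x (g y)" using assms(1) by (auto simp: sa_def)
  define w where "w = g v"
  have wS: "w \<in> S" using assms(3,5) w_def by auto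
  define a where "a = inner w (g v)"
  define c where "c = inner w (g w)"
  have c0: "c \<ge> 0" using assms(4) wS c_def by auto
  have key: "\<And>t. 0 \<le> 2 * t * a + t * t * c"
  proof -
    fix t :: real
    have "v + t *\<^sub>R w \<in> S" using assms(2,5) wS by (simp add: subspace_add subspace_scale)
    then have "0 \<le> inner (v + t *\<^sub>R w) (g (v + t *\<^sub>R w))" using assms(4) by auto
    also have "\<dots> = inner v (g v) + t * inner v (g w) + t * inner w (g v) + t * t * inner w (g w)"
      by (simp add: linear_add[OF lin] linear_cmul[OF lin] inner_add_left inner_add_right algebra_simps)
    also have "inner v (g w) = inner w (g v)" by (metis sym inner_commute)
    finally show "0 \<le> 2 * t * a + t * t * c" using assms(6) by (simp add: a_def c_def algebra_simps)
  qed
  have "a = 0"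
  proof (rule ccontr)
    assume an: "a \<noteq> 0"
    have "0 \<le> 2 * (- a / (c + 1)) * a + (- a / (c + 1)) * (- a / (c + 1)) * c" by (rule key)
    with neg_quad[OF c0 an] show False by linarith
  qed
  then show ?thesis by (simp add: a_def w_def)
qed

lemma eigvec:
  fixes f :: "'a::euclidean_space \<Rightarrow> 'a"
  assumes "sa f" "subspace S" "f ` S \<subseteq> S" "S \<noteq> {0}"
  shows "\<exists>v\<in>S. norm v = 1 \<and> f v = inner v (f v) *\<^sub>R v"
proof -
  have lin: "linear f" and sym: "\<And>x y. inner (f x) y = inner x (f y)" using assms(1) by (auto simp: sa_def)
  define K where "K = S \<inter> sphere 0 1"
  have "compact K" unfolding K_def using closed_subspace[OF assms(2)] by (simp add: closed_Int_compact)
  moreover have "K \<noteq> {}"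
  proof -
    have "\<exists>x\<in>S. x \<noteq> 0"
    proof (rule ccontr)
      assume "\<not> (\<exists>x\<in>S. x \<noteq> 0)"
      then have "S \<subseteq> {0}" by auto
      then show False using assms(4) subspace_0[OF assms(2)] by auto
    qed
    then obtain x where "x \<in> S" "x \<noteq> 0" by blast
    then have "inverse (norm x) *\<^sub>R x \<in> K" using assms(2) by (simp add: K_def subspace_scale)
    then show ?thesis by auto
  qed
  moreover have "continuous_on K (\<lambda>x. inner x (f x))"
  proof -
    have "continuous_on K f" using lin linear_conv_bounded_linear linear_continuous_on by blast
    then show ?thesis by (intro continuous_intros)
  qed
  ultimately obtain v where vK: "v \<in> K" and vmax: "\<And>y. y \<in> K \<Longrightarrow> inner y (f y) \<le> inner v (f v)"
    using continuous_attains_sup[of K "\<lambda>x. inner x (f x)"] by auto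
  define l where "l = inner v (f v)"
  define g where "g = (\<lambda>x. l *\<^sub>R x - f x)"
  have lg: "linear g" by (rule linearI) (simp_all add: g_def linear_add[OF lin] linear_cmul[OF lin] algebra_simps)
  have "sa g" unfolding sa_def using lg sym by (simp add: g_def inner_diff_left inner_diff_right)
  moreover have "g ` S \<subseteq> S" using assms(2,3) unfolding g_def using subspace_diff subspace_scale by blast
  moreover have "\<forall>x\<in>S. 0 \<le> inner x (g x)"
  proof
    fix x assume xS: "x \<in> S"
    show "0 \<le> inner x (g x)"
    proof (cases "x = 0")
      case True then show ?thesis by (simp add: g_def linear_0[OF lin])
    next
      case False
      define u where "u = inverse (norm x) *\<^sub>R x"
      have "u \<in> K" using xS False assms(2) by (simp add: K_def u_def subspace_scale)
      then have "inner u (f u) \<le> l" using vmax l_def by auto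
      moreover have xu: "x = norm x *\<^sub>R u" using False by (simp add: u_def)
      have "inner x (g x) = (norm x)^2 * (l * inner u u - inner u (f u))"
        by (subst (1 2) xu) (simp add: g_def linear_cmul[OF lin] inner_diff_right power2_eq_square algebra_simps)
      moreover have "inner u u = 1" using \<open>u \<in> K\<close> by (simp add: K_def dot_square_norm)
      ultimately show ?thesis by simp
    qed
  qed
  moreover have vS: "v \<in> S" using vK K_def by auto
  moreover have "inner v (g v) = 0" using vK by (simp add: g_def l_def K_def inner_diff_right dot_square_norm)
  ultimately have "g v = 0" by (rule psd_zero[OF _ assms(2)])
  then have "f v = l *\<^sub>R v" by (simp add: g_def)
  moreover have "norm v = 1" using vK K_def by auto
  ultimately show ?thesis using vS l_def by blast
qed

definition onb_eig :: "('a::real_inner \<Rightarrow> 'a) \<Rightarrow> 'a set \<Rightarrow> 'a set \<Rightarrow> bool" where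
  "onb_eig f S B \<longleftrightarrow> finite B \<and> B \<subseteq> S \<and> (\<forall>b\<in>B. norm b = 1 \<and> f b = inner b (f b) *\<^sub>R b)
     \<and> (\<forall>b\<in>B. \<forall>c\<in>B. b \<noteq> c \<longrightarrow> inner b c = 0) \<and> (\<forall>x\<in>S. x = (\<Sum>b\<in>B. inner b x *\<^sub>R b))"

lemma eigbasis_sub:
  fixes f :: "'a::euclidean_space \<Rightarrow> 'a"
  assumes "sa f"
  shows "subspace S \<Longrightarrow> f ` S \<subseteq> S \<Longrightarrow> \<exists>B. onb_eig f S B"
proof (induction "dim S" arbitrary: S rule: less_induct)
  case less
  have lin: "linear f" and sym: "\<And>x y. inner (f x) y = inner x (f y)" using assms(1) by (auto simp: sa_def)
  show ?case
  proof (cases "S = {0}")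
    case True
    then show ?thesis by (rule_tac x="{}" in exI) (simp add: onb_eig_def)
  next
    case False
    obtain v where vS: "v \<in> S" and nv: "norm v = 1" and fv: "f v = inner v (f v) *\<^sub>R v"
      using eigvec[OF assms less.prems False] by blast
    define l where "l = inner v (f v)"
    have vv: "inner v v = 1" using nv by (simp add: dot_square_norm)
    define S' where "S' = S \<inter> {x. inner v x = 0}"
    have sub': "subspace S'" unfolding S'_def using less.prems(1) subspace_hyperplane[of v] by (rule subspace_inter)
    have inv': "f ` S' \<subseteq> S'"
    proof
      fix y assume "y \<in> f ` S'"
      then obtain x where x: "x \<in> S" "inner v x = 0" "y = f x" by (auto simp: S'_def)
      have "inner v (f x) = inner (f v) x" using sym by simp
      also have "\<dots> = 0" using x fv by (metis inner_scaleR_left mult_zero_right)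
      finally show "y \<in> S'" using x less.prems(2) by (auto simp: S'_def)
    qed
    have "S' \<subset> S" using vS vv unfolding S'_def by (metis (mono_tags, lifting) Int_iff inf_le1 mem_Collect_eq psubsetI zero_neq_one)
    then have "dim S' < dim S" using dim_psubset sub' less.prems(1) by (metis span_eq_iff)
    then obtain B' where B': "onb_eig f S' B'" using less.hyps sub' inv' by blast
    have vB': "v \<notin> B'" using B' vv by (auto simp: onb_eig_def S'_def)
    have "onb_eig f S (insert v B')"
      unfolding onb_eig_def
    proof (intro conjI)
      show "finite (insert v B')" using B' by (simp add: onb_eig_def)
      show "insert v B' \<subseteq> S" using B' vS by (auto simp: onb_eig_def S'_def)
      show "\<forall>b\<in>insert v B'. norm b = 1 \<and> f b = inner b (f b) *\<^sub>R b" using B' nv fv by (auto simp: onb_eig_def)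
      show "\<forall>b\<in>insert v B'. \<forall>c\<in>insert v B'. b \<noteq> c \<longrightarrow> inner b c = 0"
        using B' by (auto simp: onb_eig_def S'_def inner_commute)
      show "\<forall>x\<in>S. x = (\<Sum>b\<in>insert v B'. inner b x *\<^sub>R b)"
      proof
        fix x assume xS: "x \<in> S"
        define y where "y = x - inner v x *\<^sub>R v"
        have "y \<in> S'" using xS vS less.prems(1) vv
          by (auto simp: S'_def y_def inner_diff_right subspace_diff subspace_scale)
        then have ye: "y = (\<Sum>b\<in>B'. inner b y *\<^sub>R b)" using B' by (auto simp: onb_eig_def)
        have "\<And>b. b \<in> B' \<Longrightarrow> inner b y = inner b x"
          using B' by (auto simp: onb_eig_def S'_def y_def inner_diff_right inner_commute)
        then have "y = (\<Sum>b\<in>B'. inner b x *\<^sub>R b)" using ye by (metis (no_types, lifting) sum.cong)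
        then have "x = inner v x *\<^sub>R v + (\<Sum>b\<in>B'. inner b x *\<^sub>R b)" by (simp add: y_def algebra_simps)
        then show "x = (\<Sum>b\<in>insert v B'. inner b x *\<^sub>R b)" using B' vB' by (simp add: onb_eig_def)
      qed
    qed
    then show ?thesis by blast
  qed
qed

lemma eigbasis:
  fixes f :: "'a::euclidean_space \<Rightarrow> 'a"
  assumes "sa f"
  shows "\<exists>B. onb_eig f UNIV B"
  using eigbasis_sub[OF assms, of UNIV] by simp

lemma onb_inner:
  assumes "onb_eig f S B" "b \<in> B" "c \<in> B"
  shows "inner c b = (if c = b then 1 else 0)"
  using assms by (auto simp: onb_eig_def dot_square_norm)

lemma sqrt_exists:
  fixes f :: "'a::euclidean_space \<Rightarrow> 'a"
  assumes "sa f" "\<forall>x. 0 \<le> inner x (f x)"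
  shows "\<exists>r. sa r \<and> (\<forall>x. 0 \<le> inner x (r x)) \<and> (\<forall>x. r (r x) = f x)"
proof -
  have lin: "linear f" using assms(1) by (auto simp: sa_def)
  obtain B where B: "onb_eig f UNIV B" using eigbasis[OF assms(1)] by blast
  have fin: "finite B" using B by (simp add: onb_eig_def)
  define lam where "lam b = inner b (f b)" for b
  have lam0: "\<And>b. lam b \<ge> 0" using assms(2) by (simp add: lam_def)
  define r where "r x = (\<Sum>b\<in>B. (sqrt (lam b) * inner b x) *\<^sub>R b)" for x
  have lr: "linear r"
    by (rule linearI) (simp_all add: r_def inner_add_right distrib_left scaleR_add_left sum.distrib scaleR_sum_right mult_ac)
  have ri: "\<And>x y. inner (r x) y = (\<Sum>b\<in>B. sqrt (lam b) * inner b x * inner b y)"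
    by (simp add: r_def inner_sum_left)
  have "inner (r x) y = inner x (r y)" for x y
  proof -
    have "inner x (r y) = inner (r y) x" by (rule inner_commute)
    then show ?thesis by (simp add: ri mult_ac)
  qed
  then have "sa r" unfolding sa_def using lr by simp
  moreover have "\<forall>x. 0 \<le> inner x (r x)"
  proof
    fix x
    have "inner x (r x) = inner (r x) x" by (simp add: inner_commute)
    also have "\<dots> = (\<Sum>b\<in>B. sqrt (lam b) * (inner b x * inner b x))" by (simp add: ri mult_ac)
    also have "\<dots> \<ge> 0" by (intro sum_nonneg mult_nonneg_nonneg[OF real_sqrt_ge_zero[OF lam0] zero_le_square])
    finally show "0 \<le> inner x (r x)" .
  qed
  moreover have "\<forall>x. r (r x) = f x"
  proof
    fix x
    have cr: "inner c (r x) = sqrt (lam c) * inner c x" if "c \<in> B" for c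
    proof -
      have "inner c (r x) = (\<Sum>b\<in>B. sqrt (lam b) * inner b x * inner c b)"
        by (simp add: r_def inner_sum_right)
      also have "\<dots> = (\<Sum>b\<in>B. if c = b then sqrt (lam b) * inner b x else 0)"
        using onb_inner[OF B _ that] by (intro sum.cong) auto
      also have "\<dots> = sqrt (lam c) * inner c x" using fin that by simp
      finally show ?thesis .
    qed
    have "r (r x) = (\<Sum>c\<in>B. (lam c * inner c x) *\<^sub>R c)"
      unfolding r_def[of "r x"] using lam0 by (intro sum.cong) (auto simp: cr real_sqrt_mult[symmetric])
    also have "\<dots> = (\<Sum>c\<in>B. inner c x *\<^sub>R f c)"
    proof (intro sum.cong refl)
      fix c assume "c \<in> B"
      then have "f c = lam c *\<^sub>R c" using B by (auto simp: onb_eig_def lam_def)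
      then show "(lam c * inner c x) *\<^sub>R c = inner c x *\<^sub>R f c" by (simp add: mult.commute)
    qed
    also have "\<dots> = f (\<Sum>c\<in>B. inner c x *\<^sub>R c)"
      by (simp add: linear_sum[OF lin] linear_cmul[OF lin])
    also have "(\<Sum>c\<in>B. inner c x *\<^sub>R c) = x" using B by (simp add: onb_eig_def)
    finally show "r (r x) = f x" .
  qed
  ultimately show ?thesis by blast
qed

lemma sqrt_unique:
  fixes r1 r2 :: "'a::euclidean_space \<Rightarrow> 'a"
  assumes "sa r1" "sa r2" "\<forall>x. 0 \<le> inner x (r1 x)" "\<forall>x. 0 \<le> inner x (r2 x)"
    "\<forall>x. r1 (r1 x) = r2 (r2 x)"
  shows "r1 = r2"
proof -
  have l1: "linear r1" and s1: "\<And>x y. inner (r1 x) y = inner x (r1 y)" using assms(1) by (auto simp: sa_def)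
  have l2: "linear r2" and s2: "\<And>x y. inner (r2 x) y = inner x (r2 y)" using assms(2) by (auto simp: sa_def)
  define X where "X x = r1 x - r2 x" for x
  have lX: "linear X" unfolding X_def
    by (rule linearI) (simp_all add: linear_add[OF l1] linear_add[OF l2] linear_cmul[OF l1] linear_cmul[OF l2] algebra_simps)
  have "sa X" unfolding sa_def using lX s1 s2 by (simp add: X_def inner_diff_left inner_diff_right)
  then obtain B where B: "onb_eig X UNIV B" using eigbasis by blast
  have Xb: "X b = 0" if bB: "b \<in> B" for b
  proof -
    define mu where "mu = inner b (X b)"
    have Xe: "X b = mu *\<^sub>R b" and nb: "norm b = 1" using B bB by (auto simp: onb_eig_def mu_def)
    define u1 where "u1 = r1 b"
    define u2 where "u2 = r2 b"
    have "inner u1 u1 = inner b (r1 (r1 b))" using s1 by (simp add: u1_def)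
    also have "\<dots> = inner b (r2 (r2 b))" using assms(5) by simp
    also have "\<dots> = inner u2 u2" using s2 by (simp add: u2_def)
    finally have uu: "inner u1 u1 = inner u2 u2" .
    have "u1 - u2 = mu *\<^sub>R b" using Xe by (simp add: X_def u1_def u2_def)
    moreover have "inner (u1 - u2) (u1 + u2) = inner u1 u1 - inner u2 u2"
      by (simp add: inner_diff_left inner_add_right inner_commute[of u2 u1])
    ultimately have "inner (mu *\<^sub>R b) (u1 + u2) = 0" using uu by simp
    then have m0: "mu * (inner b u1 + inner b u2) = 0" by (simp add: inner_add_right distrib_left)
    show "X b = 0"
    proof (cases "mu = 0")
      case True then show ?thesis using Xe by simp
    next
      case False
      then have "inner b u1 + inner b u2 = 0" using m0 by simp
      moreover have "inner b u1 \<ge> 0" "inner b u2 \<ge> 0" using assms(3,4) by (auto simp: u1_def u2_def)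
      ultimately have "inner b (r1 b) = 0" "inner b (r2 b) = 0" by (auto simp: u1_def u2_def)
      then have "r1 b = 0" "r2 b = 0"
        using psd_zero[OF assms(1) subspace_UNIV] psd_zero[OF assms(2) subspace_UNIV] assms(3,4) by auto
      then show ?thesis by (simp add: X_def)
    qed
  qed
  have "X x = 0" for x
  proof -
    have "X x = X (\<Sum>b\<in>B. inner b x *\<^sub>R b)" using B by (simp add: onb_eig_def)
    also have "\<dots> = 0" by (simp add: linear_sum[OF lX] linear_cmul[OF lX] Xb)
    finally show ?thesis .
  qed
  then show ?thesis by (auto simp: X_def fun_eq_iff)
qed



definition ii :: "complex^'d \<Rightarrow> complex^'d" where
  "ii x = (\<chi> k. \<i> * x$k)"

lemma vec_eqI: "(\<And>i. x$i = y$i) \<Longrightarrow> x = y" by (simp add: vec_eq_iff)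

lemma ii_nth[simp]: "ii x $ k = \<i> * x$k" by (simp add: ii_def)

lemma inner_complex_cnj: "inner (a::complex) b = Re (cnj a * b)"
  by (simp add: inner_complex_def)

lemma ii_ii[simp]: "ii (ii x) = - x" by (simp add: vec_eq_iff)
lemma ii_neg[simp]: "ii (- x) = - ii x" by (simp add: vec_eq_iff)
lemma ii_add: "ii (x + y) = ii x + ii y" by (simp add: vec_eq_iff algebra_simps)
lemma ii_scaleR: "ii (c *\<^sub>R x) = c *\<^sub>R ii x" by (simp add: vec_eq_iff)
lemma linear_ii: "linear ii" by (rule linearI) (simp_all add: ii_add ii_scaleR)

lemma inner_ii_ii: "inner (ii a) (ii b) = inner a b"
  by (simp add: inner_vec_def inner_complex_cnj)
lemma inner_ii_left: "inner (ii a) b = - inner a (ii b)"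
  by (simp add: inner_vec_def inner_complex_cnj sum_negf[symmetric])
lemma inner_ii_self: "inner (ii a) a = 0"
  by (simp add: inner_vec_def inner_complex_cnj)

lemma mv_linear: "linear (\<lambda>x. (A::'d::finite cmat) *v x)"
  by (rule linearI) (simp_all add: vec_eq_iff matrix_vector_mult_def sum.distrib ring_distribs
        scaleR_sum_right)

lemma mv_ii: "(A::'d::finite cmat) *v ii x = ii (A *v x)"
  by (simp add: vec_eq_iff matrix_vector_mult_def sum_distrib_left mult_ac)

lemma quad_re_im:
  fixes A :: "'d::finite cmat"
  shows "Re (\<Sum>i\<in>UNIV. cnj (x$i) * (A *v x)$i) = inner x (A *v x)"
    and "Im (\<Sum>i\<in>UNIV. cnj (x$i) * (A *v x)$i) = inner (ii x) (A *v x)"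
  by (simp_all add: inner_vec_def inner_complex_def)

lemma psd_iff: "psd (A::'d::finite cmat) \<longleftrightarrow> (\<forall>x. inner (ii x) (A *v x) = 0 \<and> 0 \<le> inner x (A *v x))"
  unfolding psd_def Let_def quad_re_im ..

lemma sa_ii_zero:
  assumes "sa (\<lambda>x. (A::'d::finite cmat) *v x)"
  shows "inner (ii x) (A *v x) = 0"
proof -
  have sym: "\<And>x y. inner (A *v x) y = inner x (A *v y)" using assms by (auto simp: sa_def)
  have "inner (ii x) (A *v x) = inner (A *v ii x) x" by (simp add: sym)
  also have "\<dots> = inner (ii (A *v x)) x" by (simp add: mv_ii)
  also have "\<dots> = - inner (A *v x) (ii x)" by (simp add: inner_ii_left)
  also have "\<dots> = - inner (ii x) (A *v x)" by (simp add: inner_commute)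
  finally show ?thesis by simp
qed

lemma psd_sa:
  assumes "psd (A::'d::finite cmat)"
  shows "sa (\<lambda>x. A *v x)"
proof -
  have lin: "linear (\<lambda>x. A *v x)" by (rule mv_linear)
  have z: "\<And>x. inner (ii x) (A *v x) = 0" using assms by (simp add: psd_iff)
  have p: "inner (ii x) (A *v y) + inner (ii y) (A *v x) = 0" for x y
  proof -
    have "0 = inner (ii (x + y)) (A *v (x + y))" using z by simp
    also have "\<dots> = inner (ii x) (A *v x) + inner (ii x) (A *v y) + inner (ii y) (A *v x) + inner (ii y) (A *v y)"
      by (simp add: ii_add matrix_vector_right_distrib inner_add_left inner_add_right)
    finally show ?thesis using z by simp
  qed
  have q: "inner x (A *v ii y) = inner (ii y) (A *v x)" for x y
  proof -
    have "inner (ii x) (A *v y) = - inner x (ii (A *v y))" by (rule inner_ii_left)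
    then have "inner (ii x) (A *v y) = - inner x (A *v ii y)" by (simp add: mv_ii)
    then show ?thesis using p[of x y] by simp
  qed
  have "inner (A *v x) z = inner x (A *v z)" for x z
  proof -
    have "inner x (A *v z) = inner x (A *v ii (- ii z))" by simp
    also have "\<dots> = inner (ii (- ii z)) (A *v x)" by (rule q)
    also have "\<dots> = inner z (A *v x)" by simp
    finally show ?thesis by (simp add: inner_commute)
  qed
  then show ?thesis using lin by (simp add: sa_def)
qed

lemma mv_axis: "((A::'d::finite cmat) *v axis j c) $ k = A$k$j * c"
  by (simp add: matrix_vector_mult_def axis_def if_distrib cong: if_cong)

lemma sa_herm:
  assumes "sa (\<lambda>x. (A::'d::finite cmat) *v x)"
  shows "adj A = A"
proof -
  have sym: "\<And>x y. inner (A *v x) y = inner x (A *v y)" using assms by (auto simp: sa_def)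
  have "cnj (A$j$i) = A$i$j" for i j
  proof -
    have "inner (A *v axis j 1) (axis i 1) = inner (axis j 1) (A *v axis i 1)" by (rule sym)
    then have r: "Re (A$i$j) = Re (A$j$i)" by (simp add: inner_axis inner_axis' mv_axis inner_complex_def)
    have "inner (A *v axis j 1) (axis i \<i>) = inner (axis j 1) (A *v axis i \<i>)" by (rule sym)
    then have m: "Im (A$i$j) = - Im (A$j$i)" by (simp add: inner_axis inner_axis' mv_axis inner_complex_def)
    show ?thesis using r m by (simp add: complex_eq_iff)
  qed
  then show ?thesis by (simp add: adj_def vec_eq_iff)
qed

lemma psd_herm: "psd A \<Longrightarrow> adj A = A"
  using psd_sa sa_herm by blast

lemma psd_real:
  assumes "psd (A::'d::finite cmat)" shows "sa (\<lambda>x. A *v x)" "\<forall>x. 0 \<le> inner x (A *v x)"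
  using assms psd_sa psd_iff by auto

lemma sqrt_unique_mat:
  assumes "psd (D1::'d::finite cmat)" "psd D2" "D1 ** D1 = D2 ** D2"
  shows "D1 = D2"
proof -
  have "(\<lambda>x. D1 *v x) = (\<lambda>x. D2 *v x)"
    using psd_real[OF assms(1)] psd_real[OF assms(2)]
    by (intro sqrt_unique) (auto simp: matrix_vector_mul_assoc assms(3))
  then show ?thesis by (simp add: matrix_eq fun_eq_iff)
qed

lemma sqrt_exists_mat:
  assumes "psd (P::'d::finite cmat)"
  shows "\<exists>D. psd D \<and> D ** D = P"
proof -
  obtain r where r: "sa r" "\<forall>x. 0 \<le> inner x (r x)" "\<forall>x. r (r x) = P *v x"
    using sqrt_exists[OF psd_real[OF assms]] by blast
  have lr: "linear r" and sr: "\<And>x y. inner (r x) y = inner x (r y)" using r(1) by (auto simp: sa_def)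
  define S where "S x = - ii (r (ii x))" for x
  have lS: "linear S" unfolding S_def
    by (rule linearI) (simp_all add: ii_add ii_scaleR linear_add[OF lr] linear_cmul[OF lr])
  have "inner (S x) y = inner x (S y)" for x y
  proof -
    have "inner (S x) y = inner (r (ii x)) (ii y)" by (simp add: S_def inner_ii_left)
    also have "\<dots> = inner (ii x) (r (ii y))" by (rule sr)
    also have "\<dots> = inner x (S y)" by (simp add: S_def inner_ii_left)
    finally show ?thesis .
  qed
  then have sS: "sa S" using lS by (simp add: sa_def)
  have pS: "\<forall>x. 0 \<le> inner x (S x)"
  proof
    fix x
    have "inner x (S x) = inner (ii x) (r (ii x))"
      by (simp add: S_def) (metis inner_ii_left inner_commute)
    then show "0 \<le> inner x (S x)" using r(2) by simp
  qed
  have "\<forall>x. S (S x) = r (r x)"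
  proof
    fix x
    have "S (S x) = - ii (r (r (ii x)))" by (simp add: S_def linear_neg[OF lr])
    also have "\<dots> = - ii (P *v ii x)" using r(3) by simp
    also have "\<dots> = P *v x" by (simp add: mv_ii)
    finally show "S (S x) = r (r x)" using r(3) by simp
  qed
  then have "S = r" using sqrt_unique[OF sS r(1) pS r(2)] by blast
  then have rii: "r (ii x) = ii (r x)" for x
    by (metis S_def ii_ii ii_neg minus_minus)
  define D :: "'d cmat" where "D = (\<chi> i j. r (axis j 1) $ i)"
  have Dr: "D *v x = r x" for x
  proof -
    have xe: "x = (\<Sum>j\<in>UNIV. Re (x$j) *\<^sub>R axis j 1 + Im (x$j) *\<^sub>R ii (axis j 1))"
    proof (rule vec_eqI)
      fix k
      show "x $ k = (\<Sum>j\<in>UNIV. Re (x$j) *\<^sub>R axis j 1 + Im (x$j) *\<^sub>R ii (axis j 1)) $ k"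
        by (simp add: axis_def complex_eq_iff if_distrib if_distribR cong: if_cong)
    qed
    have "r x = (\<Sum>j\<in>UNIV. Re (x$j) *\<^sub>R r (axis j 1) + Im (x$j) *\<^sub>R ii (r (axis j 1)))"
      by (subst xe) (simp add: linear_sum[OF lr] linear_add[OF lr] linear_cmul[OF lr] rii)
    also have "\<dots> = D *v x"
    proof (rule vec_eqI)
      fix k
      show "(\<Sum>j\<in>UNIV. Re (x$j) *\<^sub>R r (axis j 1) + Im (x$j) *\<^sub>R ii (r (axis j 1))) $ k = (D *v x) $ k"
        by (auto simp: D_def matrix_vector_mult_def complex_eq_iff intro!: sum.cong)
    qed
    finally show ?thesis by simp
  qed
  have "sa (\<lambda>x. D *v x)" using r(1) Dr by simp
  then have "\<And>x. inner (ii x) (D *v x) = 0" by (rule sa_ii_zero)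
  then have "psd D" using r(2) Dr by (simp add: psd_iff)
  moreover have "D ** D = P"
    by (simp add: matrix_eq matrix_vector_mul_assoc[symmetric] Dr r(3))
  ultimately show ?thesis by blast
qed

lemma psd_sqrt_props:
  assumes "psd (P::'d::finite cmat)"
  shows "psd (psd_sqrt P)" "psd_sqrt P ** psd_sqrt P = P"
proof -
  have "\<exists>!D. psd D \<and> D ** D = P"
    using sqrt_exists_mat[OF assms] sqrt_unique_mat by metis
  then have "psd (psd_sqrt P) \<and> psd_sqrt P ** psd_sqrt P = P"
    unfolding psd_sqrt_def by (rule theI')
  then show "psd (psd_sqrt P)" "psd_sqrt P ** psd_sqrt P = P" by auto
qed



lemma adj_adj[simp]: "adj (adj A) = A" by (simp add: adj_def vec_eq_iff)
lemma adj_mult: "adj (A ** B) = adj B ** adj A"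
  by (simp add: adj_def matrix_matrix_mult_def vec_eq_iff mult.commute)
lemma adj_add: "adj (A + B) = adj A + adj B" by (simp add: adj_def vec_eq_iff)
lemma adj_diff: "adj (A - B) = adj A - adj B" by (simp add: adj_def vec_eq_iff)
lemma adj_zero[simp]: "adj 0 = 0" by (simp add: adj_def vec_eq_iff)
lemma adj_scaleR: "adj (c *\<^sub>R A) = c *\<^sub>R adj A" by (simp add: adj_def vec_eq_iff)
lemma adj_mat1[simp]: "adj (mat 1) = mat 1" by (simp add: adj_def vec_eq_iff mat_def)

lemma matrix_diff_rdistrib: "((A::'a::ring_1^'n^'m) - B) ** C = A ** C - B ** C"
  by (simp add: matrix_matrix_mult_def vec_eq_iff sum_subtractf left_diff_distrib)
lemma matrix_add_rdistrib': "((A::'a::semiring_1^'n^'m) + B) ** C = A ** C + B ** C"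
  by (simp add: matrix_matrix_mult_def vec_eq_iff sum.distrib distrib_right)

definition kop :: "'d::finite cmat list \<Rightarrow> 'd cmat" where
  "kop Ks = sum_list (map (\<lambda>K. adj K ** K) Ks)"

lemma kraus_Nil[simp]: "kraus [] \<rho> = 0" by (simp add: kraus_def)
lemma kraus_Cons[simp]: "kraus (K # Ks) \<rho> = K ** \<rho> ** adj K + kraus Ks \<rho>" by (simp add: kraus_def)
lemma kraus_append: "kraus (Ks @ Ms) \<rho> = kraus Ks \<rho> + kraus Ms \<rho>" by (simp add: kraus_def)
lemma kop_Nil[simp]: "kop [] = 0" by (simp add: kop_def)
lemma kop_Cons[simp]: "kop (K # Ks) = adj K ** K + kop Ks" by (simp add: kop_def)
lemma kop_append: "kop (Ks @ Ms) = kop Ks + kop Ms" by (simp add: kop_def)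

lemma kraus_scale: "kraus (map (\<lambda>K. c *\<^sub>R K) Ks) \<rho> = (c * c) *\<^sub>R kraus Ks \<rho>"
  by (induction Ks) (simp_all add: adj_scaleR scalar_matrix_assoc matrix_scalar_ac scaleR_add_right)

lemma kop_herm: "adj (kop Ks) = kop Ks"
  by (induction Ks) (simp_all add: adj_add adj_mult)

lemma trace_scaleR: "trace (c *\<^sub>R (A::'d::finite cmat)) = c *\<^sub>R trace A"
  by (simp add: trace_def scaleR_sum_right)

lemma trace_kraus: "trace (kraus Ks \<rho>) = trace (kop Ks ** \<rho>)"
proof (induction Ks)
  case Nil then show ?case by (simp add: trace_def)
next
  case (Cons K Ks)
  have "trace (K ** \<rho> ** adj K) = trace (adj K ** K ** \<rho>)"
    by (simp add: trace_mul_sym[of "K ** \<rho>"] matrix_mul_assoc)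
  then show ?case using Cons by (simp add: trace_add matrix_add_rdistrib')
qed

lemma sum_delta_mult: "(\<Sum>l\<in>(UNIV::'n::finite set). (c l::'a::semiring_1) * (if l = j then 1 else 0)) = c j"
proof -
  have "(\<Sum>l\<in>(UNIV::'n set). c l * (if l = j then 1 else 0)) = (\<Sum>l\<in>UNIV. if l = j then c l else 0)"
    by (rule sum.cong) auto
  then show ?thesis by simp
qed

lemma trace_ext:
  assumes "\<And>\<rho>. trace ((A::'d::finite cmat) ** \<rho>) = trace (B ** \<rho>)"
  shows "A = B"
proof -
  have "A$i$j = B$i$j" for i j
  proof -
    define E :: "'d cmat" where "E = (\<chi> a b. if a = j then (if b = i then 1 else 0) else 0)"
    have "trace (C ** E) = C$i$j" for C :: "'d cmat"
    proof -
      have "(C ** E)$k$k = (if k = i then C$k$j else 0)" for k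
        by (cases "k = i") (simp_all add: matrix_matrix_mult_def E_def sum_delta_mult)
      then have "trace (C ** E) = (\<Sum>k\<in>UNIV. if k = i then C$k$j else 0)"
        unfolding trace_def by simp
      then show ?thesis by simp
    qed
    then show ?thesis using assms[of E] by simp
  qed
  then show ?thesis by (simp add: vec_eq_iff)
qed

lemma cptp_scaled:
  assumes "c > 0" "kop L = c *\<^sub>R mat 1"
  shows "CPTP (\<lambda>\<rho>. inverse c *\<^sub>R kraus L \<rho>)"
proof -
  have "\<forall>\<rho>. inverse c *\<^sub>R kraus L \<rho> = kraus (map (\<lambda>K. sqrt (inverse c) *\<^sub>R K) L) \<rho>"
    using assms(1) by (simp add: kraus_scale)
  then have "completely_positive (\<lambda>\<rho>. inverse c *\<^sub>R kraus L \<rho>)"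
    unfolding completely_positive_def by blast
  moreover have "trace_preserving (\<lambda>\<rho>. inverse c *\<^sub>R kraus L \<rho>)"
    unfolding trace_preserving_def
    using assms by (simp add: trace_scaleR trace_kraus scalar_matrix_assoc[symmetric])
  ultimately show ?thesis by (simp add: CPTP_def)
qed

lemma part3:
  fixes \<Sigma> :: "'d::finite cmat \<Rightarrow> 'd cmat" and p :: real
  assumes tp: "trace_preserving \<Sigma>" and dec: "\<forall>\<rho>. \<Sigma> \<rho> = kraus Ks \<rho> - kraus Ms \<rho>" and p: "p > 0"
    and le: "loewner_le (sum_list (map (\<lambda>M. adj M ** M) Ms)) (p *\<^sub>R mat 1)"
  shows "(let D = psd_sqrt (p *\<^sub>R mat 1 - sum_list (map (\<lambda>M. adj M ** M) Ms));
              Lp = (\<lambda>\<rho>. inverse (1 + p) *\<^sub>R (kraus Ks \<rho> + D ** \<rho> ** adj D));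
              Lm = (\<lambda>\<rho>. inverse p *\<^sub>R (kraus Ms \<rho> + D ** \<rho> ** adj D))
          in CPTP Lp \<and> CPTP Lm \<and> (\<forall>\<rho>. \<Sigma> \<rho> = (1 + p) *\<^sub>R Lp \<rho> - p *\<^sub>R Lm \<rho>))"
proof -
  have kK: "kop Ks = mat 1 + kop Ms"
  proof (rule trace_ext)
    fix \<rho> :: "'d cmat"
    have "kraus Ks \<rho> = \<Sigma> \<rho> + kraus Ms \<rho>" using dec by simp
    then have "trace (kraus Ks \<rho>) = trace \<rho> + trace (kraus Ms \<rho>)"
      using tp by (simp add: trace_add trace_preserving_def)
    then show "trace (kop Ks ** \<rho>) = trace ((mat 1 + kop Ms) ** \<rho>)"
      by (simp add: trace_kraus matrix_add_rdistrib' trace_add)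
  qed
  define P where "P = p *\<^sub>R mat 1 - kop Ms"
  have psdP: "psd P" using le by (simp add: loewner_le_def P_def kop_def)
  define D where "D = psd_sqrt P"
  have DD: "D ** D = P" and hD: "adj D = D"
    using psd_sqrt_props[OF psdP] psd_herm by (auto simp: D_def)
  have k1: "kop (Ks @ [D]) = (1 + p) *\<^sub>R mat 1"
    by (simp add: kop_append hD DD kK P_def scaleR_add_left)
  have k2: "kop (Ms @ [D]) = p *\<^sub>R mat 1"
    by (simp add: kop_append hD DD P_def)
  have e1: "(\<lambda>\<rho>. inverse (1 + p) *\<^sub>R (kraus Ks \<rho> + D ** \<rho> ** adj D)) = (\<lambda>\<rho>. inverse (1 + p) *\<^sub>R kraus (Ks @ [D]) \<rho>)"
    by (simp add: kraus_append)
  have e2: "(\<lambda>\<rho>. inverse p *\<^sub>R (kraus Ms \<rho> + D ** \<rho> ** adj D)) = (\<lambda>\<rho>. inverse p *\<^sub>R kraus (Ms @ [D]) \<rho>)"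
    by (simp add: kraus_append)
  have c1: "CPTP (\<lambda>\<rho>. inverse (1 + p) *\<^sub>R (kraus Ks \<rho> + D ** \<rho> ** adj D))"
    unfolding e1 using p k1 by (intro cptp_scaled) auto
  have c2: "CPTP (\<lambda>\<rho>. inverse p *\<^sub>R (kraus Ms \<rho> + D ** \<rho> ** adj D))"
    unfolding e2 using p k2 by (intro cptp_scaled) auto
  have eq: "\<Sigma> \<rho> = (1 + p) *\<^sub>R (inverse (1 + p) *\<^sub>R (kraus Ks \<rho> + D ** \<rho> ** adj D))
            - p *\<^sub>R (inverse p *\<^sub>R (kraus Ms \<rho> + D ** \<rho> ** adj D))" for \<rho>
  proof -
    have "1 + p \<noteq> 0" "p \<noteq> 0" using p by auto
    then show ?thesis using dec by simp
  qed
  show ?thesis unfolding Let_def kop_def[symmetric] P_def[symmetric] D_def[symmetric]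
    using c1 c2 eq by blast
qed



lemma sum_delta_mult': "(\<Sum>l\<in>(UNIV::'n::finite set). (if l = j then 1 else 0) * (c l::'a::semiring_1)) = c j"
proof -
  have "(\<Sum>l\<in>(UNIV::'n set). (if l = j then 1 else 0) * c l) = (\<Sum>l\<in>UNIV. if l = j then c l else 0)"
    by (rule sum.cong) auto
  then show ?thesis by simp
qed

lemma sum_single:
  assumes "\<And>i. i \<noteq> a \<Longrightarrow> g i = 0"
  shows "(\<Sum>i\<in>(UNIV::'n::finite set). g i) = g a"
proof -
  have "(\<Sum>i\<in>(UNIV::'n set). g i) = g a + (\<Sum>i\<in>UNIV - {a}. g i)"
    by (rule sum.remove) auto
  also have "(\<Sum>i\<in>UNIV - {a}. g i) = 0" using assms by (intro sum.neutral) auto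
  finally show ?thesis by simp
qed

definition Eu :: "'d::finite \<Rightarrow> 'd \<Rightarrow> 'd cmat" where
  "Eu i j = (\<chi> a b. if a = i then (if b = j then 1 else 0) else 0)"

lemma mm_nth: "(A ** B) $ i $ j = (\<Sum>k\<in>UNIV. A$i$k * B$k$j)" by (simp add: matrix_matrix_mult_def)

lemma Eu_left: "(Eu i j ** \<rho>) $ a $ m = (if a = i then \<rho>$j$m else 0)"
  by (cases "a = i") (simp_all add: Eu_def matrix_matrix_mult_def sum_delta_mult')

lemma adj_Eu: "adj (Eu k l) $ m $ b = (if m = l then (if b = k then 1 else 0) else 0)"
  by (auto simp: Eu_def adj_def)

lemma EE: "(Eu i j ** \<rho> ** adj (Eu k l)) $ a $ b = (if a = i \<and> b = k then \<rho>$j$l else 0)"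
proof -
  have "(Eu i j ** \<rho> ** adj (Eu k l)) $ a $ b = (\<Sum>m\<in>UNIV. (if a = i then \<rho>$j$m else 0) * (if m = l then (if b = k then 1 else 0) else 0))"
    by (simp only: mm_nth[of "Eu i j ** \<rho>" "adj (Eu k l)"] Eu_left adj_Eu)
  also have "\<dots> = (if a = i \<and> b = k then \<rho>$j$l else 0)"
    by (cases "a = i"; cases "b = k") (simp_all add: sum_delta_mult)
  finally show ?thesis .
qed

lemma cscale_nth[simp]: "cscale c A $ i $ j = c * A$i$j" by (simp add: cscale_def)

lemma lin_zero: "cmat_linear f \<Longrightarrow> f 0 = 0"
  unfolding cmat_linear_def by (metis add_cancel_right_right add_0)

lemma lin_sum:
  assumes "cmat_linear f" "finite S" shows "f (sum g S) = (\<Sum>s\<in>S. f (g s))"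
  using assms(2) by (induction S rule: finite_induct) (use assms(1) in \<open>auto simp: lin_zero cmat_linear_def\<close>)

lemma rho_dec: "\<rho> = (\<Sum>j\<in>UNIV. \<Sum>l\<in>UNIV. cscale (\<rho>$j$l) (Eu j l))"
proof -
  have "(\<Sum>j\<in>UNIV. \<Sum>l\<in>UNIV. cscale (\<rho>$j$l) (Eu j l)) $ a $ b = \<rho>$a$b" for a b
  proof -
    have "(\<Sum>j\<in>UNIV. \<Sum>l\<in>UNIV. cscale (\<rho>$j$l) (Eu j l)) $ a $ b
        = (\<Sum>j\<in>UNIV. \<Sum>l\<in>UNIV. \<rho>$j$l * Eu j l $ a $ b)" by simp
    also have "\<dots> = (\<Sum>l\<in>UNIV. \<rho>$a$l * Eu a l $ a $ b)"
      by (rule sum_single) (simp add: Eu_def)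
    also have "\<dots> = \<rho>$a$b"
      by (rule trans[OF sum_single]) (auto simp: Eu_def)
    finally show ?thesis .
  qed
  then show ?thesis by (simp add: vec_eq_iff)
qed

lemma sigma_R:
  assumes lin: "cmat_linear \<Sigma>"
  shows "\<Sigma> \<rho> = (\<Sum>i\<in>UNIV. \<Sum>j\<in>UNIV. \<Sum>k\<in>UNIV. \<Sum>l\<in>UNIV.
            cscale (\<Sigma> (Eu j l) $ i $ k) (Eu i j ** \<rho> ** adj (Eu k l)))" (is "_ = ?R")
proof -
  from rho_dec[of \<rho>] have "\<Sigma> \<rho> = \<Sigma> (\<Sum>j\<in>UNIV. \<Sum>l\<in>UNIV. cscale (\<rho>$j$l) (Eu j l))" by (rule arg_cong)
  also have "\<dots> = (\<Sum>j\<in>UNIV. \<Sum>l\<in>UNIV. cscale (\<rho>$j$l) (\<Sigma> (Eu j l)))"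
    using lin by (simp add: lin_sum cmat_linear_def)
  finally have s: "\<Sigma> \<rho> = (\<Sum>j\<in>UNIV. \<Sum>l\<in>UNIV. cscale (\<rho>$j$l) (\<Sigma> (Eu j l)))" .
  have "?R $ a $ b = \<Sigma> \<rho> $ a $ b" for a b
  proof -
    have "?R $ a $ b = (\<Sum>i\<in>UNIV. \<Sum>j\<in>UNIV. \<Sum>k\<in>UNIV. \<Sum>l\<in>UNIV.
            \<Sigma> (Eu j l) $ i $ k * (if a = i \<and> b = k then \<rho>$j$l else 0))"
      by (simp add: EE)
    also have "\<dots> = (\<Sum>j\<in>UNIV. \<Sum>k\<in>UNIV. \<Sum>l\<in>UNIV.
            \<Sigma> (Eu j l) $ a $ k * (if b = k then \<rho>$j$l else 0))"
      by (rule trans[OF sum_single[of a]]) auto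
    also have "\<dots> = (\<Sum>j\<in>UNIV. \<Sum>l\<in>UNIV. \<Sigma> (Eu j l) $ a $ b * \<rho>$j$l)"
      by (intro sum.cong refl sum_single trans[OF sum_single[of b]]) auto
    also have "\<dots> = \<Sigma> \<rho> $ a $ b" by (subst s) (simp add: mult.commute)
    finally show ?thesis .
  qed
  then show ?thesis by (simp add: vec_eq_iff)
qed

lemma adj_sum: "adj (sum f S) = (\<Sum>s\<in>S. adj (f s))"
  by (simp add: adj_def vec_eq_iff)
lemma adj_cscale: "adj (cscale c A) = cscale (cnj c) (adj A)"
  by (simp add: adj_def vec_eq_iff cscale_def)
lemma adj_triple: "adj (A ** B ** C) = adj C ** adj B ** adj A"
  by (simp add: adj_mult matrix_mul_assoc)
lemma cscale_mult_left: "cscale c A ** B = cscale c (A ** B)"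
  by (simp add: vec_eq_iff mm_nth sum_distrib_left mult.assoc)
lemma cscale_mult_right: "A ** cscale c B = cscale c (A ** B)"
  by (simp add: vec_eq_iff mm_nth sum_distrib_left mult_ac)
lemma cscale_cscale: "cscale c (cscale d A) = cscale (c * d) A"
  by (simp add: vec_eq_iff mult.assoc)
lemma cscale_add: "cscale c (A + B) = cscale c A + cscale c B"
  by (simp add: vec_eq_iff distrib_left)

lemma polar:
  "cscale c (B ** \<rho> ** adj A) + cscale (cnj c) (A ** \<rho> ** adj B) =
   (A + cscale c B) ** \<rho> ** adj (A + cscale c B) - A ** \<rho> ** adj A - cscale c B ** \<rho> ** adj (cscale c B)"
  by (simp add: adj_add adj_cscale matrix_add_ldistrib matrix_add_rdistrib' cscale_mult_left cscale_mult_right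
      cscale_cscale cscale_add algebra_simps mult.commute)

definition krep :: "('d::finite cmat \<Rightarrow> 'd cmat) \<Rightarrow> bool" where
  "krep F \<longleftrightarrow> (\<exists>Ks. \<forall>\<rho>. kraus Ks \<rho> = F \<rho>)"

lemma krep_single: "krep (\<lambda>\<rho>. K ** \<rho> ** adj K)"
  unfolding krep_def by (rule exI[of _ "[K]"]) simp

lemma krep_add: "krep F \<Longrightarrow> krep G \<Longrightarrow> krep (\<lambda>\<rho>. F \<rho> + G \<rho>)"
  unfolding krep_def by (metis kraus_append)

lemma krep_sum:
  assumes "finite S" "\<And>s. s \<in> S \<Longrightarrow> krep (F s)"
  shows "krep (\<lambda>\<rho>. \<Sum>s\<in>S. F s \<rho>)"
  using assms
proof (induction S rule: finite_induct)
  case empty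
  then show ?case unfolding krep_def by (rule_tac x="[]" in exI) simp
next
  case (insert x F')
  then have "krep (\<lambda>\<rho>. F x \<rho> + (\<Sum>s\<in>F'. F s \<rho>))" by (intro krep_add) auto
  then show ?case using insert by simp
qed

lemma part2:
  fixes \<Sigma> :: "'d::finite cmat \<Rightarrow> 'd cmat"
  assumes lin: "cmat_linear \<Sigma>" and hp: "hermiticity_preserving \<Sigma>"
  shows "\<exists>Ks Ms. \<forall>\<rho>. \<Sigma> \<rho> = kraus Ks \<rho> - kraus Ms \<rho>"
proof -
  define c where "c i j k l = \<Sigma> (Eu j l) $ i $ k" for i j k l
  define F where "F i j k l = Eu k l + cscale (c i j k l) (Eu i j)" for i j k l
  define G where "G i j k l = cscale (c i j k l) (Eu i j)" for i j k l
  define Pf where "Pf \<rho> = (\<Sum>i\<in>UNIV. \<Sum>j\<in>UNIV. \<Sum>k\<in>UNIV. \<Sum>l\<in>UNIV. F i j k l ** \<rho> ** adj (F i j k l))" for \<rho>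
  define Mf where "Mf \<rho> = (\<Sum>i\<in>UNIV. \<Sum>j\<in>UNIV. \<Sum>k\<in>UNIV. \<Sum>l\<in>UNIV.
      Eu k l ** \<rho> ** adj (Eu k l) + G i j k l ** \<rho> ** adj (G i j k l))" for \<rho>
  have two: "\<Sigma> \<rho> + \<Sigma> \<rho> = Pf \<rho> - Mf \<rho>" for \<rho>
  proof -
    have h: "\<Sigma> \<rho> = adj (\<Sigma> (adj \<rho>))" using hp by (simp add: hermiticity_preserving_def)
    have r1: "\<Sigma> \<rho> = (\<Sum>i\<in>UNIV. \<Sum>j\<in>UNIV. \<Sum>k\<in>UNIV. \<Sum>l\<in>UNIV.
            cscale (c i j k l) (Eu i j ** \<rho> ** adj (Eu k l)))"
      unfolding c_def by (rule sigma_R[OF lin])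
    have r2: "adj (\<Sigma> (adj \<rho>)) = (\<Sum>i\<in>UNIV. \<Sum>j\<in>UNIV. \<Sum>k\<in>UNIV. \<Sum>l\<in>UNIV.
            cscale (cnj (c i j k l)) (Eu k l ** \<rho> ** adj (Eu i j)))"
      unfolding c_def by (subst sigma_R[OF lin]) (simp add: adj_sum adj_cscale adj_triple)
    have "\<Sigma> \<rho> + \<Sigma> \<rho> = (\<Sum>i\<in>UNIV. \<Sum>j\<in>UNIV. \<Sum>k\<in>UNIV. \<Sum>l\<in>UNIV.
            cscale (c i j k l) (Eu i j ** \<rho> ** adj (Eu k l)) + cscale (cnj (c i j k l)) (Eu k l ** \<rho> ** adj (Eu i j)))"
      by (subst (2) h) (simp add: r1 r2 sum.distrib)
    also have "\<dots> = (\<Sum>i\<in>UNIV. \<Sum>j\<in>UNIV. \<Sum>k\<in>UNIV. \<Sum>l\<in>UNIV.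
            F i j k l ** \<rho> ** adj (F i j k l) - (Eu k l ** \<rho> ** adj (Eu k l) + G i j k l ** \<rho> ** adj (G i j k l)))"
      by (simp add: polar F_def G_def diff_diff_eq)
    also have "\<dots> = Pf \<rho> - Mf \<rho>"
      by (simp add: Pf_def Mf_def sum_subtractf)
    finally show ?thesis .
  qed
  have "krep Pf" unfolding Pf_def by (intro krep_sum krep_single) auto
  then obtain Ks0 where K0: "\<And>\<rho>. kraus Ks0 \<rho> = Pf \<rho>" unfolding krep_def by blast
  have "krep Mf" unfolding Mf_def by (intro krep_sum krep_add krep_single) auto
  then obtain Ms0 where M0: "\<And>\<rho>. kraus Ms0 \<rho> = Mf \<rho>" unfolding krep_def by blast
  define s where "s = sqrt (1/2::real)"
  have ss: "s * s = 1/2" by (simp add: s_def)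
  have "\<Sigma> \<rho> = kraus (map (\<lambda>K. s *\<^sub>R K) Ks0) \<rho> - kraus (map (\<lambda>K. s *\<^sub>R K) Ms0) \<rho>" for \<rho>
  proof -
    have "\<Sigma> \<rho> = (1/2::real) *\<^sub>R (\<Sigma> \<rho> + \<Sigma> \<rho>)" by (simp add: scaleR_add_right[symmetric] )
    also have "\<dots> = (1/2::real) *\<^sub>R (kraus Ks0 \<rho> - kraus Ms0 \<rho>)" by (simp add: two K0 M0)
    finally show ?thesis by (simp add: kraus_scale ss scaleR_diff_right)
  qed
  then show ?thesis by blast
qed



lemma inner_cvec: "inner (u::complex^'d::finite) v = Re (\<Sum>i\<in>UNIV. cnj (u$i) * v$i)"
  by (simp add: inner_vec_def inner_complex_cnj)

lemma herm_sa:
  assumes "adj (A::'d::finite cmat) = A"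
  shows "sa (\<lambda>x. A *v x)"
proof -
  have hA: "A$j$i = cnj (A$i$j)" for i j
  proof -
    have "adj A $ j $ i = A $ j $ i" using assms by simp
    then show ?thesis by (simp add: adj_def)
  qed
  have "inner (A *v x) y = inner x (A *v y)" for x y
  proof -
    have "(\<Sum>i\<in>UNIV. cnj ((A *v x)$i) * y$i) = (\<Sum>i\<in>UNIV. \<Sum>j\<in>UNIV. cnj (x$j) * (cnj (A$i$j) * y$i))"
      by (simp add: matrix_vector_mult_def sum_distrib_right sum_distrib_left mult_ac)
    also have "\<dots> = (\<Sum>i\<in>UNIV. \<Sum>j\<in>UNIV. cnj (x$j) * (A$j$i * y$i))"
      by (simp only: hA[symmetric])
    also have "\<dots> = (\<Sum>j\<in>UNIV. \<Sum>i\<in>UNIV. cnj (x$j) * (A$j$i * y$i))" by (rule sum.swap)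
    also have "\<dots> = (\<Sum>j\<in>UNIV. cnj (x$j) * (A *v y)$j)"
      by (simp add: matrix_vector_mult_def sum_distrib_left)
    finally show ?thesis by (simp add: inner_cvec)
  qed
  then show ?thesis using mv_linear by (simp add: sa_def)
qed

lemma mv_scaleR_mat: "((c::real) *\<^sub>R (A::'d::finite cmat)) *v x = c *\<^sub>R (A *v x)"
  by (simp add: vec_eq_iff matrix_vector_mult_def scaleR_sum_right)

lemma bound:
  "\<exists>p::real. p > 0 \<and> loewner_le (sum_list (map (\<lambda>M. adj M ** M) Ms)) (p *\<^sub>R mat (1::complex))"
proof -
  define A where "A = kop Ms"
  have hA: "adj A = A" by (simp add: A_def kop_herm)
  obtain K where K: "K > 0" "\<And>x. norm (A *v x) \<le> K * norm x"
    using linear_bounded_pos[OF mv_linear[of A]] by blast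
  define B where "B = K *\<^sub>R mat 1 - A"
  have hB: "adj B = B" by (simp add: B_def adj_diff adj_scaleR hA)
  have Bx: "B *v x = K *\<^sub>R x - A *v x" for x
    by (simp add: B_def matrix_vector_mult_diff_rdistrib mv_scaleR_mat)
  have "psd B"
    unfolding psd_iff
  proof
    fix x
    have "inner x (A *v x) \<le> norm x * norm (A *v x)" by (rule norm_cauchy_schwarz)
    also have "\<dots> \<le> norm x * (K * norm x)" using K(2) by (simp add: mult_left_mono)
    finally have "0 \<le> inner x (B *v x)"
      by (simp add: Bx inner_diff_right dot_square_norm power2_eq_square mult_ac)
    then show "inner (ii x) (B *v x) = 0 \<and> 0 \<le> inner x (B *v x)"
      using sa_ii_zero[OF herm_sa[OF hB]] by simp
  qed
  then show ?thesis using K(1) by (auto simp: loewner_le_def B_def A_def kop_def)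
qed

theorem mainTheorem1:
  fixes \<Sigma> :: "'d::finite cmat \<Rightarrow> 'd cmat"
  assumes "cmat_linear \<Sigma>" and "trace_preserving \<Sigma>" and "hermiticity_preserving \<Sigma>"
  shows "(\<exists>p::real. p > 0 \<and> (\<exists>Lp Lm. CPTP Lp \<and> CPTP Lm \<and>
            (\<forall>\<rho>. \<Sigma> \<rho> = (1 + p) *\<^sub>R Lp \<rho> - p *\<^sub>R Lm \<rho>)))
    \<and> (\<exists>Ks Ms. \<forall>\<rho>. \<Sigma> \<rho> = kraus Ks \<rho> - kraus Ms \<rho>)
    \<and> (\<forall>Ks Ms (p::real). (\<forall>\<rho>. \<Sigma> \<rho> = kraus Ks \<rho> - kraus Ms \<rho>) \<longrightarrow> p > 0 \<longrightarrow>
         loewner_le (sum_list (map (\<lambda>M. adj M ** M) Ms)) (p *\<^sub>R mat 1) \<longrightarrow>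
         (let D = psd_sqrt (p *\<^sub>R mat 1 - sum_list (map (\<lambda>M. adj M ** M) Ms));
              Lp = (\<lambda>\<rho>. inverse (1 + p) *\<^sub>R (kraus Ks \<rho> + D ** \<rho> ** adj D));
              Lm = (\<lambda>\<rho>. inverse p *\<^sub>R (kraus Ms \<rho> + D ** \<rho> ** adj D))
          in CPTP Lp \<and> CPTP Lm \<and> (\<forall>\<rho>. \<Sigma> \<rho> = (1 + p) *\<^sub>R Lp \<rho> - p *\<^sub>R Lm \<rho>)))"
proof -
  have P3: "\<forall>Ks Ms (p::real). (\<forall>\<rho>. \<Sigma> \<rho> = kraus Ks \<rho> - kraus Ms \<rho>) \<longrightarrow> p > 0 \<longrightarrow>
         loewner_le (sum_list (map (\<lambda>M. adj M ** M) Ms)) (p *\<^sub>R mat 1) \<longrightarrow>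
         (let D = psd_sqrt (p *\<^sub>R mat 1 - sum_list (map (\<lambda>M. adj M ** M) Ms));
              Lp = (\<lambda>\<rho>. inverse (1 + p) *\<^sub>R (kraus Ks \<rho> + D ** \<rho> ** adj D));
              Lm = (\<lambda>\<rho>. inverse p *\<^sub>R (kraus Ms \<rho> + D ** \<rho> ** adj D))
          in CPTP Lp \<and> CPTP Lm \<and> (\<forall>\<rho>. \<Sigma> \<rho> = (1 + p) *\<^sub>R Lp \<rho> - p *\<^sub>R Lm \<rho>))"
    by (intro allI impI) (rule part3[OF assms(2)])
  obtain Ks Ms where dec: "\<forall>\<rho>. \<Sigma> \<rho> = kraus Ks \<rho> - kraus Ms \<rho>"
    using part2[OF assms(1,3)] by blast
  obtain p :: real where p: "p > 0" "loewner_le (sum_list (map (\<lambda>M. adj M ** M) Ms)) (p *\<^sub>R mat 1)"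
    using bound by blast
  have "\<exists>Lp Lm. CPTP Lp \<and> CPTP Lm \<and> (\<forall>\<rho>. \<Sigma> \<rho> = (1 + p) *\<^sub>R Lp \<rho> - p *\<^sub>R Lm \<rho>)"
    using P3[rule_format, OF dec[rule_format] p(1) p(2)] unfolding Let_def by blast
  then have "\<exists>p::real. p > 0 \<and> (\<exists>Lp Lm. CPTP Lp \<and> CPTP Lm \<and>
            (\<forall>\<rho>. \<Sigma> \<rho> = (1 + p) *\<^sub>R Lp \<rho> - p *\<^sub>R Lm \<rho>))"
    using p(1) by (intro exI[of _ p]) simp
  moreover have "\<exists>Ks Ms. \<forall>\<rho>. \<Sigma> \<rho> = kraus Ks \<rho> - kraus Ms \<rho>" using dec by (intro exI)
  ultimately show ?thesis using P3 by (intro conjI)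
qed


thm_deps mainTheorem1

end
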